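(* Let $a,b>0$, $D=[0,a]\times[0,b]$, and let $f:D\to\mathbb{R}$ be a $C^3$ function. Let $p\in\operatorname{int}D$ be a saddle point of $f$, i.e. a stationary point at which the determinant of the Hessian of $f$ is negative. Then there exist a neighborhood $U$ of $p$ and a number $r>0$ such that for every sufficiently large $n$, every grid vertex $p_{i,j}$ of $D_n$ lying in $U$ is neither minimal nor maximal within its grid circle $C_r(p_{i,j})$.
   Context: For $n\ge1$, $D_n$ denotes the division of $D$ into $n\times n$ congruent rectangles; its grid vertices are the points $p_{i,j}=\left(\frac{i}{n}a,\frac{j}{n}b\right)$, $0\le i,j\le n$. The grid circle of centre $p_{i,j}$ and radius $r$ is $C_r(p_{i,j})=\{p_{l,m}: 0\le l,m\le n,\ \max\{|l-i|,|m-j|\}\le r\}$. A grid vertex $p_{i,j}$ is minimal (resp. maximal) within $C_r(p_{i,j})$ if $f(p_{i,j})\le f(q)$ (resp. $f(p_{i,j})\ge f(q)$) for every $q\in C_r(p_{i,j})$. *)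

theory Defs
  imports "HOL-Analysis.Analysis"
begin

fun Ck :: "nat \<Rightarrow> (real \<times> real \<Rightarrow> real) \<Rightarrow> (real \<times> real) set \<Rightarrow> bool" where
  "Ck 0 g S = continuous_on S g"
| "Ck (Suc k) g S =
     ((\<forall>x\<in>S. g differentiable (at x)) \<and>
      (\<forall>v. Ck k (\<lambda>x. frechet_derivative g (at x) v) S))"

definition second_deriv :: "(real \<times> real \<Rightarrow> real) \<Rightarrow> real \<times> real \<Rightarrow> real \<times> real \<Rightarrow> real \<times> real \<Rightarrow> real" where
  "second_deriv g x v w = frechet_derivative (\<lambda>y. frechet_derivative g (at y) v) (at x) w"

definition hessian_det :: "(real \<times> real \<Rightarrow> real) \<Rightarrow> real \<times> real \<Rightarrow> real" where
  "hessian_det g x =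
     second_deriv g x (1,0) (1,0) * second_deriv g x (0,1) (0,1)
     - second_deriv g x (1,0) (0,1) * second_deriv g x (0,1) (1,0)"

definition grid_vertex :: "real \<Rightarrow> real \<Rightarrow> nat \<Rightarrow> nat \<Rightarrow> nat \<Rightarrow> real \<times> real" where
  "grid_vertex a b n i j = (real i / real n * a, real j / real n * b)"

definition grid_circle :: "nat \<Rightarrow> nat \<Rightarrow> nat \<Rightarrow> real \<Rightarrow> (nat \<times> nat) set" where
  "grid_circle n i j r =
     {(l, m). l \<le> n \<and> m \<le> n \<and>
        max \<bar>real l - real i\<bar> \<bar>real m - real j\<bar> \<le> r}"

definition grid_minimal :: "(real \<times> real \<Rightarrow> real) \<Rightarrow> real \<Rightarrow> real \<Rightarrow> nat \<Rightarrow> nat \<Rightarrow> nat \<Rightarrow> real \<Rightarrow> bool" where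
  "grid_minimal f a b n i j r =
     (\<forall>(l, m)\<in>grid_circle n i j r. f (grid_vertex a b n i j) \<le> f (grid_vertex a b n l m))"

definition grid_maximal :: "(real \<times> real \<Rightarrow> real) \<Rightarrow> real \<Rightarrow> real \<Rightarrow> nat \<Rightarrow> nat \<Rightarrow> nat \<Rightarrow> real \<Rightarrow> bool" where
  "grid_maximal f a b n i j r =
     (\<forall>(l, m)\<in>grid_circle n i j r. f (grid_vertex a b n i j) \<ge> f (grid_vertex a b n l m))"

end

theory Submission
  imports Defs
begin


lemma lin2:
  fixes L :: "real \<times> real \<Rightarrow> real"
  assumes "linear L"
  shows "L (u1, u2) = u1 * L (1,0) + u2 * L (0,1)"
proof -
  have "(u1, u2) = u1 *\<^sub>R (1,0) + u2 *\<^sub>R (0,1)" by simp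
  then have "L (u1,u2) = L (u1 *\<^sub>R (1,0)) + L (u2 *\<^sub>R (0,1))"
    by (metis assms linear_add)
  also have "\<dots> = u1 * L (1,0) + u2 * L (0,1)"
    using assms linear_scale[of L] by (metis real_scaleR_def)
  finally show ?thesis .
qed

lemma fd_linear:
  assumes "g differentiable (at x)"
  shows "linear (frechet_derivative g (at x))"
  using assms frechet_derivative_works has_derivative_bounded_linear bounded_linear.linear by blast

lemma line_deriv:
  fixes g :: "real \<times> real \<Rightarrow> real"
  assumes "g differentiable (at (q + s *\<^sub>R v))"
  shows "((\<lambda>t. g (q + t *\<^sub>R v)) has_real_derivative frechet_derivative g (at (q + s *\<^sub>R v)) v) (at s)"
proof -
  let ?D = "frechet_derivative g (at (q + s *\<^sub>R v))"
  have 1: "((\<lambda>t. q + t *\<^sub>R v) has_derivative (\<lambda>t. t *\<^sub>R v)) (at s)"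
    by (auto intro!: derivative_eq_intros)
  have 2: "(g has_derivative ?D) (at (q + s *\<^sub>R v))"
    using assms frechet_derivative_works by blast
  have 3: "((\<lambda>t. g (q + t *\<^sub>R v)) has_derivative (\<lambda>t. ?D (t *\<^sub>R v))) (at s)"
    using has_derivative_compose[OF 1 2] .
  have "linear ?D" using fd_linear[OF assms] .
  then have "(\<lambda>t. ?D (t *\<^sub>R v)) = (\<lambda>t. ?D v * t)"
    by (auto simp: linear_scale)
  then have "(\<lambda>t. ?D (t *\<^sub>R v)) = (*) (?D v)" by (auto simp: fun_eq_iff)
  then show ?thesis using 3 by (simp add: has_field_derivative_def)
qed

lemma line_deriv2:
  fixes g :: "real \<times> real \<Rightarrow> real"
  assumes "(\<lambda>y. frechet_derivative g (at y) v) differentiable (at (q + s *\<^sub>R v))"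
  shows "((\<lambda>t. frechet_derivative g (at (q + t *\<^sub>R v)) v) has_real_derivative second_deriv g (q + s *\<^sub>R v) v v) (at s)"
  unfolding second_deriv_def using line_deriv[OF assms] by simp

lemma concave_strict:
  fixes g :: "real \<times> real \<Rightarrow> real"
  assumes t: "t > 0"
    and H: "\<And>s. \<bar>s\<bar> \<le> t \<Longrightarrow> g differentiable (at (q + s *\<^sub>R v)) \<and>
       (\<lambda>y. frechet_derivative g (at y) v) differentiable (at (q + s *\<^sub>R v)) \<and>
       second_deriv g (q + s *\<^sub>R v) v v < 0"
  shows "g (q + t *\<^sub>R v) + g (q + (-t) *\<^sub>R v) < 2 * g q"
proof -
  define \<phi> where "\<phi> = (\<lambda>s. g (q + s *\<^sub>R v))"
  define \<phi>' where "\<phi>' = (\<lambda>s. frechet_derivative g (at (q + s *\<^sub>R v)) v)"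
  have d1: "DERIV \<phi> s :> \<phi>' s" if "\<bar>s\<bar> \<le> t" for s
    unfolding \<phi>_def \<phi>'_def using line_deriv H[OF that] by blast
  have d2: "DERIV \<phi>' s :> second_deriv g (q + s *\<^sub>R v) v v" if "\<bar>s\<bar> \<le> t" for s
    unfolding \<phi>'_def using line_deriv2 H[OF that] by blast
  obtain z1 where z1: "0 < z1" "z1 < t" "\<phi> t - \<phi> 0 = (t - 0) * \<phi>' z1"
    using MVT2[of 0 t \<phi> \<phi>'] t d1 by auto
  obtain z2 where z2: "-t < z2" "z2 < 0" "\<phi> 0 - \<phi> (-t) = (0 - (-t)) * \<phi>' z2"
    using MVT2[of "-t" 0 \<phi> \<phi>'] t d1 by auto
  have "\<phi>' z2 > \<phi>' z1"
  proof (rule DERIV_neg_imp_decreasing[of z2 z1 \<phi>'])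
    show "z2 < z1" using z1 z2 by simp
  next
    fix x assume "z2 \<le> x" "x \<le> z1"
    then show "\<exists>y. DERIV \<phi>' x :> y \<and> y < 0" proof -
      have "\<bar>x\<bar> \<le> t" using \<open>z2 \<le> x\<close> \<open>x \<le> z1\<close> z1 z2 by auto
      then show ?thesis using d2[of x] H[of x] by auto
    qed
  qed
  then have "t * \<phi>' z1 < t * \<phi>' z2" using t by simp
  then have "\<phi> t + \<phi> (-t) < 2 * \<phi> 0" using z1(3) z2(3) by (simp add: algebra_simps)
  then show ?thesis unfolding \<phi>_def by simp
qed

lemma convex_strict:
  fixes g :: "real \<times> real \<Rightarrow> real"
  assumes t: "t > 0"
    and H: "\<And>s. \<bar>s\<bar> \<le> t \<Longrightarrow> g differentiable (at (q + s *\<^sub>R v)) \<and>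
       (\<lambda>y. frechet_derivative g (at y) v) differentiable (at (q + s *\<^sub>R v)) \<and>
       second_deriv g (q + s *\<^sub>R v) v v > 0"
  shows "g (q + t *\<^sub>R v) + g (q + (-t) *\<^sub>R v) > 2 * g q"
proof -
  define \<phi> where "\<phi> = (\<lambda>s. g (q + s *\<^sub>R v))"
  define \<phi>' where "\<phi>' = (\<lambda>s. frechet_derivative g (at (q + s *\<^sub>R v)) v)"
  have d1: "DERIV \<phi> s :> \<phi>' s" if "\<bar>s\<bar> \<le> t" for s
    unfolding \<phi>_def \<phi>'_def using line_deriv H[OF that] by blast
  have d2: "DERIV \<phi>' s :> second_deriv g (q + s *\<^sub>R v) v v" if "\<bar>s\<bar> \<le> t" for s
    unfolding \<phi>'_def using line_deriv2 H[OF that] by blast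
  obtain z1 where z1: "0 < z1" "z1 < t" "\<phi> t - \<phi> 0 = (t - 0) * \<phi>' z1"
    using MVT2[of 0 t \<phi> \<phi>'] t d1 by auto
  obtain z2 where z2: "-t < z2" "z2 < 0" "\<phi> 0 - \<phi> (-t) = (0 - (-t)) * \<phi>' z2"
    using MVT2[of "-t" 0 \<phi> \<phi>'] t d1 by auto
  have "\<phi>' z2 < \<phi>' z1"
  proof (rule DERIV_pos_imp_increasing[of z2 z1 \<phi>'])
    show "z2 < z1" using z1 z2 by simp
  next
    fix x assume "z2 \<le> x" "x \<le> z1"
    then show "\<exists>y. DERIV \<phi>' x :> y \<and> y > 0" proof -
      have "\<bar>x\<bar> \<le> t" using \<open>z2 \<le> x\<close> \<open>x \<le> z1\<close> z1 z2 by auto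
      then show ?thesis using d2[of x] H[of x] by auto
    qed
  qed
  then have "t * \<phi>' z1 > t * \<phi>' z2" using t by simp
  then have "\<phi> t + \<phi> (-t) > 2 * \<phi> 0" using z1(3) z2(3) by (simp add: algebra_simps)
  then show ?thesis unfolding \<phi>_def by simp
qed



lemma quad_neg:
  fixes \<alpha> \<beta> \<gamma> :: real
  assumes "\<beta>^2 > 4*\<alpha>*\<gamma>"
  shows "\<exists>x y. \<alpha>*x^2 + \<beta>*x*y + \<gamma>*y^2 < 0"
proof (cases "\<alpha> = 0")
  case True
  then have "\<beta> \<noteq> 0" using assms by auto
  let ?x = "(-1-\<gamma>)/\<beta>"
  have "\<alpha>*?x^2 + \<beta>*?x*1 + \<gamma>*1^2 = -1" using True \<open>\<beta> \<noteq> 0\<close> by (simp add: field_simps)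
  then show ?thesis by (intro exI[of _ ?x] exI[of _ 1]) simp
next
  case False
  show ?thesis
  proof (cases "\<alpha> < 0")
    case True
    then have "\<alpha>*1^2 + \<beta>*1*0 + \<gamma>*0^2 < 0" by simp
    then show ?thesis by blast
  next
    case F2: False
    then have "\<alpha> > 0" using False by simp
    have "\<alpha>*(-\<beta>)^2 + \<beta>*(-\<beta>)*(2*\<alpha>) + \<gamma>*(2*\<alpha>)^2 = \<alpha> * (4*\<alpha>*\<gamma> - \<beta>^2)"
      by (simp add: power2_eq_square algebra_simps)
    also have "\<dots> < 0" using \<open>\<alpha> > 0\<close> assms by (simp add: mult_pos_neg)
    finally show ?thesis by blast
  qed
qed

lemma int_point:
  fixes \<alpha> \<beta> \<gamma> :: real
  assumes "\<alpha>*x0^2 + \<beta>*x0*y0 + \<gamma>*y0^2 < 0"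
  shows "\<exists>k l::int. \<alpha>*(of_int k)^2 + \<beta>* of_int k* of_int l + \<gamma>*(of_int l)^2 < 0"
proof -
  define G where "G = (\<lambda>z::real\<times>real. \<alpha>*(fst z)^2 + \<beta>* fst z* snd z + \<gamma>*(snd z)^2)"
  have "continuous_on UNIV G" unfolding G_def by (intro continuous_intros)
  then have "open {z. G z < 0}" by (intro open_Collect_less) (auto intro: continuous_intros)
  moreover have "(x0,y0) \<in> {z. G z < 0}" using assms by (simp add: G_def)
  ultimately obtain e where e: "e > 0" "ball (x0,y0) e \<subseteq> {z. G z < 0}"
    using open_contains_ball by blast
  obtain r1 where r1: "r1 \<in> \<rat>" "x0 < r1" "r1 < x0 + e/2" using Rats_dense_in_real[of x0 "x0+e/2"] e by auto
  obtain r2 where r2: "r2 \<in> \<rat>" "y0 < r2" "r2 < y0 + e/2" using Rats_dense_in_real[of y0 "y0+e/2"] e by auto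
  have "dist (x0,y0) (r1,r2) \<le> \<bar>x0-r1\<bar> + \<bar>y0-r2\<bar>"
    unfolding dist_norm using norm_Pair_le[of "x0-r1" "y0-r2"] by simp
  also have "\<dots> < e" using r1 r2 by simp
  finally have "G (r1,r2) < 0" using e by auto
  obtain p1 q1 where pq1: "q1 > 0" "r1 = of_int p1 / of_int q1" using r1(1) Rats_cases' by metis
  obtain p2 q2 where pq2: "q2 > 0" "r2 = of_int p2 / of_int q2" using r2(1) Rats_cases' by metis
  define c where "c = real_of_int (q1*q2)"
  have c: "c > 0" using pq1 pq2 by (simp add: c_def)
  have "G (c*r1, c*r2) = c^2 * G (r1,r2)" by (simp add: G_def power2_eq_square algebra_simps)
  also have "\<dots> < 0" using c \<open>G (r1,r2) < 0\<close> by (simp add: mult_pos_neg)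
  finally have "G (c*r1, c*r2) < 0" .
  moreover have "c*r1 = of_int (p1*q2)" "c*r2 = of_int (p2*q1)"
    using pq1 pq2 by (simp_all add: c_def field_simps)
  ultimately have "G (of_int (p1*q2), of_int (p2*q1)) < 0" by metis
  then show ?thesis unfolding G_def by (intro exI[of _ "p1*q2"] exI[of _ "p2*q1"]) simp
qed

lemma grid_shift:
  fixes a b :: real and k l :: int
  assumes "a > 0" "b > 0" "n > 0"
    and "grid_vertex a b n i j + (1 / real n) *\<^sub>R (of_int k * a, of_int l * b) \<in> {0..a} \<times> {0..b}"
    and "\<bar>of_int k\<bar> \<le> r" "\<bar>of_int l\<bar> \<le> r"
  shows "\<exists>l' m'. (l', m') \<in> grid_circle n i j r \<and>
     grid_vertex a b n l' m' = grid_vertex a b n i j + (1 / real n) *\<^sub>R (of_int k * a, of_int l * b)"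
proof -
  define I where "I = int i + k"
  define J where "J = int j + l"
  have e1: "real i / real n * a + 1 / real n * (of_int k * a) = of_int I / real n * a"
    by (simp add: I_def add_divide_distrib algebra_simps)
  have e2: "real j / real n * b + 1 / real n * (of_int l * b) = of_int J / real n * b"
    by (simp add: J_def add_divide_distrib algebra_simps)
  have m: "0 \<le> of_int I / real n * a" "of_int I / real n * a \<le> a"
          "0 \<le> of_int J / real n * b" "of_int J / real n * b \<le> b"
    using assms(4) e1 e2 by (auto simp: grid_vertex_def)
  have "0 \<le> of_int I / real n" using m(1) assms(1) by (metis zero_le_mult_iff not_le)
  then have I0: "I \<ge> 0" using assms(3) by (simp add: zero_le_divide_iff)
  have "of_int I / real n \<le> 1" using m(2) assms(1) by (metis mult_le_cancel_right2 not_le)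
  then have "of_int I \<le> real n" using assms(3) by (simp add: divide_le_eq)
  then have In: "I \<le> int n" by linarith
  have "0 \<le> of_int J / real n" using m(3) assms(2) by (metis zero_le_mult_iff not_le)
  then have J0: "J \<ge> 0" using assms(3) by (simp add: zero_le_divide_iff)
  have "of_int J / real n \<le> 1" using m(4) assms(2) by (metis mult_le_cancel_right2 not_le)
  then have "of_int J \<le> real n" using assms(3) by (simp add: divide_le_eq)
  then have Jn: "J \<le> int n" by linarith
  have rI: "real (nat I) = of_int I" using I0 by simp
  have rJ: "real (nat J) = of_int J" using J0 by simp
  have "(nat I, nat J) \<in> grid_circle n i j r"
    unfolding grid_circle_def using In Jn I0 J0 assms(5,6) rI rJ by (auto simp: I_def J_def)
  moreover have "grid_vertex a b n (nat I) (nat J) = grid_vertex a b n i j + (1 / real n) *\<^sub>R (of_int k * a, of_int l * b)"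
    unfolding grid_vertex_def using rI rJ e1 e2 by simp
  ultimately show ?thesis by blast
qed



lemma not_min_dir:
  fixes k l :: int
  assumes "a > 0" "b > 0" "n > 0"
    and "grid_vertex a b n i j + (1 / real n) *\<^sub>R (of_int k * a, of_int l * b) \<in> {0..a} \<times> {0..b}"
    and "grid_vertex a b n i j + (- (1 / real n)) *\<^sub>R (of_int k * a, of_int l * b) \<in> {0..a} \<times> {0..b}"
    and "\<bar>of_int k\<bar> \<le> r" "\<bar>of_int l\<bar> \<le> r"
  shows "f (grid_vertex a b n i j + (1 / real n) *\<^sub>R (of_int k * a, of_int l * b)) +
         f (grid_vertex a b n i j + (- (1 / real n)) *\<^sub>R (of_int k * a, of_int l * b))
          < 2 * f (grid_vertex a b n i j) \<Longrightarrow> \<not> grid_minimal f a b n i j r"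
    and "f (grid_vertex a b n i j + (1 / real n) *\<^sub>R (of_int k * a, of_int l * b)) +
         f (grid_vertex a b n i j + (- (1 / real n)) *\<^sub>R (of_int k * a, of_int l * b))
          > 2 * f (grid_vertex a b n i j) \<Longrightarrow> \<not> grid_maximal f a b n i j r"
proof -
  let ?q = "grid_vertex a b n i j"
  have neg: "(- (1 / real n)) *\<^sub>R (of_int k * a, of_int l * b) = (1 / real n) *\<^sub>R (of_int (-k) * a, of_int (-l) * b)"
    by simp
  obtain l1 m1 where 1: "(l1, m1) \<in> grid_circle n i j r"
    "grid_vertex a b n l1 m1 = ?q + (1 / real n) *\<^sub>R (of_int k * a, of_int l * b)"
    using grid_shift[OF assms(1,2,3,4,6,7)] by blast
  obtain l2 m2 where 2: "(l2, m2) \<in> grid_circle n i j r"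
    "grid_vertex a b n l2 m2 = ?q + (- (1 / real n)) *\<^sub>R (of_int k * a, of_int l * b)"
    using grid_shift[of a b n i j "-k" "-l" r] assms(1,2,3,5,6,7) neg by auto
  show "f (?q + (1 / real n) *\<^sub>R (of_int k * a, of_int l * b)) +
         f (?q + (- (1 / real n)) *\<^sub>R (of_int k * a, of_int l * b))
          < 2 * f ?q \<Longrightarrow> \<not> grid_minimal f a b n i j r"
  proof
    assume lt: "f (?q + (1 / real n) *\<^sub>R (of_int k * a, of_int l * b)) +
         f (?q + (- (1 / real n)) *\<^sub>R (of_int k * a, of_int l * b)) < 2 * f ?q"
      and gm: "grid_minimal f a b n i j r"
    have "f ?q \<le> f (grid_vertex a b n l1 m1)" "f ?q \<le> f (grid_vertex a b n l2 m2)"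
      using gm 1(1) 2(1) unfolding grid_minimal_def by auto
    then show False using lt 1(2) 2(2) by simp
  qed
  show "f (?q + (1 / real n) *\<^sub>R (of_int k * a, of_int l * b)) +
         f (?q + (- (1 / real n)) *\<^sub>R (of_int k * a, of_int l * b))
          > 2 * f ?q \<Longrightarrow> \<not> grid_maximal f a b n i j r"
  proof
    assume lt: "f (?q + (1 / real n) *\<^sub>R (of_int k * a, of_int l * b)) +
         f (?q + (- (1 / real n)) *\<^sub>R (of_int k * a, of_int l * b)) > 2 * f ?q"
      and gm: "grid_maximal f a b n i j r"
    have "f ?q \<ge> f (grid_vertex a b n l1 m1)" "f ?q \<ge> f (grid_vertex a b n l2 m2)"
      using gm 1(1) 2(1) unfolding grid_maximal_def by auto
    then show False using lt 1(2) 2(2) by simp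
  qed
qed



theorem theorem1:
  fixes a b :: real and f :: "real \<times> real \<Rightarrow> real" and p :: "real \<times> real"
  assumes "a > 0" and "b > 0"
    and "Ck 3 f (interior ({0..a} \<times> {0..b}))"
    and "p \<in> interior ({0..a} \<times> {0..b})"
    and "frechet_derivative f (at p) = (\<lambda>v. 0)"
    and "hessian_det f p < 0"
  shows "\<exists>U r. open U \<and> p \<in> U \<and> r > 0 \<and>
           (\<exists>N. \<forall>n\<ge>N. \<forall>i\<le>n. \<forall>j\<le>n.
              grid_vertex a b n i j \<in> U \<longrightarrow>
                \<not> grid_minimal f a b n i j r \<and> \<not> grid_maximal f a b n i j r)"
proof -
  define S where "S = interior ({0..a} \<times> {0..b})"
  have oS: "open S" by (simp add: S_def)
  have pS: "p \<in> S" using assms(4) by (simp add: S_def)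
  have SD: "S \<subseteq> {0..a} \<times> {0..b}" unfolding S_def by (rule interior_subset)
  have C3: "Ck (Suc (Suc (Suc 0))) f S" using assms(3) by (simp add: S_def numeral_3_eq_3)
  then have D1: "\<forall>x\<in>S. f differentiable (at x)"
     and D2: "\<forall>v. \<forall>x\<in>S. (\<lambda>y. frechet_derivative f (at y) v) differentiable (at x)"
     and D3: "\<forall>v w. \<forall>x\<in>S. (\<lambda>y. frechet_derivative (\<lambda>y. frechet_derivative f (at y) v) (at y) w) differentiable (at x)"
    by simp_all
  have cont: "continuous_on S (\<lambda>x. second_deriv f x v v)" for v
    unfolding second_deriv_def
    by (rule continuous_at_imp_continuous_on) (use D3 differentiable_imp_continuous_within in blast)
  define A where "A = second_deriv f p (1,0) (1,0)"
  define B where "B = second_deriv f p (1,0) (0,1)"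
  define B' where "B' = second_deriv f p (0,1) (1,0)"
  define C where "C = second_deriv f p (0,1) (0,1)"
  have expand: "second_deriv f p (u1,u2) (u1,u2) = A*u1^2 + (B+B')*u1*u2 + C*u2^2" for u1 u2
  proof -
    define h where "h = (\<lambda>v y. frechet_derivative f (at y) v)"
    define Dh1 where "Dh1 = frechet_derivative (h (1,0)) (at p)"
    define Dh2 where "Dh2 = frechet_derivative (h (0,1)) (at p)"
    have eq: "u1 * h (1,0) y + u2 * h (0,1) y = h (u1,u2) y" if "y \<in> S" for y
      unfolding h_def using lin2[OF fd_linear] D1 that by metis
    have d1: "(h (1,0) has_derivative Dh1) (at p)"
      unfolding Dh1_def h_def using D2 pS frechet_derivative_works by blast
    have d2: "(h (0,1) has_derivative Dh2) (at p)"
      unfolding Dh2_def h_def using D2 pS frechet_derivative_works by blast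
    have "((\<lambda>y. u1 * h (1,0) y + u2 * h (0,1) y) has_derivative (\<lambda>w. u1 * Dh1 w + u2 * Dh2 w)) (at p)"
      by (intro has_derivative_add has_derivative_mult_right d1 d2)
    then have "(h (u1,u2) has_derivative (\<lambda>w. u1 * Dh1 w + u2 * Dh2 w)) (at p)"
      by (rule has_derivative_transform_within_open[OF _ oS pS]) (use eq in auto)
    then have fd: "frechet_derivative (h (u1,u2)) (at p) = (\<lambda>w. u1 * Dh1 w + u2 * Dh2 w)"
      by (metis frechet_derivative_at)
    have l1: "linear Dh1" "linear Dh2"
      using d1 d2 has_derivative_bounded_linear bounded_linear.linear by blast+
    have "second_deriv f p (u1,u2) (u1,u2) = u1 * Dh1 (u1,u2) + u2 * Dh2 (u1,u2)"
      using fd unfolding second_deriv_def h_def by simp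
    also have "\<dots> = u1 * (u1 * A + u2 * B) + u2 * (u1 * B' + u2 * C)"
      using lin2[OF l1(1), of u1 u2] lin2[OF l1(2), of u1 u2]
      unfolding A_def B_def B'_def C_def second_deriv_def Dh1_def Dh2_def h_def by simp
    finally show ?thesis by (simp add: power2_eq_square algebra_simps)
  qed
  have hd: "A*C - B*B' < 0" using assms(6) unfolding hessian_det_def A_def B_def B'_def C_def .
  define \<alpha> where "\<alpha> = A*a^2"
  define \<beta> where "\<beta> = (B+B')*a*b"
  define \<gamma> where "\<gamma> = C*b^2"
  have disc0: "(B+B')^2 - 4*A*C > 0"
  proof -
    have "(B+B')^2 - 4*A*C = (B-B')^2 + 4*(B*B' - A*C)" by (simp add: power2_eq_square algebra_simps)
    moreover have "(B-B')^2 \<ge> 0" by simp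
    moreover have "4*(B*B' - A*C) > 0" using hd by simp
    ultimately show ?thesis by (metis add_nonneg_pos)
  qed
  have disc: "\<beta>^2 > 4*\<alpha>*\<gamma>"
  proof -
    have "\<beta>^2 - 4*\<alpha>*\<gamma> = (a*b)^2 * ((B+B')^2 - 4*A*C)"
      by (simp add: \<alpha>_def \<beta>_def \<gamma>_def power2_eq_square algebra_simps)
    moreover have "(a*b)^2 > 0" using assms(1,2) by simp
    ultimately show ?thesis using disc0 by (metis diff_gt_0_iff_gt mult_pos_pos)
  qed
  have Qform: "second_deriv f p (of_int k * a, of_int l * b) (of_int k * a, of_int l * b)
      = \<alpha>*(of_int k)^2 + \<beta> * of_int k * of_int l + \<gamma>*(of_int l)^2" for k l :: int
    unfolding expand \<alpha>_def \<beta>_def \<gamma>_def by (simp add: power2_eq_square algebra_simps)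
  obtain x0 y0 where "\<alpha>*x0^2 + \<beta>*x0*y0 + \<gamma>*y0^2 < 0" using quad_neg[OF disc] by blast
  then obtain k l :: int where kl: "\<alpha>*(of_int k)^2 + \<beta> * of_int k * of_int l + \<gamma>*(of_int l)^2 < 0"
    using int_point by blast
  have disc': "(-\<beta>)^2 > 4*(-\<alpha>)*(-\<gamma>)" using disc by simp
  obtain x1 y1 where "(-\<alpha>)*x1^2 + (-\<beta>)*x1*y1 + (-\<gamma>)*y1^2 < 0" using quad_neg[OF disc'] by blast
  then obtain k' l' :: int where "(-\<alpha>)*(of_int k')^2 + (-\<beta>) * of_int k' * of_int l' + (-\<gamma>)*(of_int l')^2 < 0"
    using int_point by blast
  then have kl': "\<alpha>*(of_int k')^2 + \<beta> * of_int k' * of_int l' + \<gamma>*(of_int l')^2 > 0" by simp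
  define v where "v = (of_int k * a, of_int l * b)"
  define w where "w = (of_int k' * a, of_int l' * b)"
  have vp: "second_deriv f p v v < 0" using kl Qform unfolding v_def by simp
  have wp: "second_deriv f p w w > 0" using kl' Qform unfolding w_def by simp
  define T where "T = S \<inter> (\<lambda>x. second_deriv f x v v) -` {..<0} \<inter> (\<lambda>x. second_deriv f x w w) -` {0<..}"
  have "open (S \<inter> (\<lambda>x. second_deriv f x v v) -` {..<0})"
    using continuous_on_open_vimage[OF oS, THEN iffD1, OF cont[of v], rule_format, OF open_lessThan[of 0]] by (simp add: Int_commute)
  moreover have "open (S \<inter> (\<lambda>x. second_deriv f x w w) -` {0<..})"
    using continuous_on_open_vimage[OF oS, THEN iffD1, OF cont[of w], rule_format, OF open_greaterThan[of 0]] by (simp add: Int_commute)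
  ultimately have "open ((S \<inter> (\<lambda>x. second_deriv f x v v) -` {..<0}) \<inter> (S \<inter> (\<lambda>x. second_deriv f x w w) -` {0<..}))"
    by (rule open_Int)
  moreover have "(S \<inter> (\<lambda>x. second_deriv f x v v) -` {..<0}) \<inter> (S \<inter> (\<lambda>x. second_deriv f x w w) -` {0<..}) = T"
    unfolding T_def by blast
  ultimately have "open T" by simp
  moreover have "p \<in> T" using pS vp wp by (simp add: T_def)
  ultimately obtain e where e: "e > 0" "ball p e \<subseteq> T" using open_contains_ball by blast
  define r where "r = real_of_int (max (max \<bar>k\<bar> \<bar>l\<bar>) (max \<bar>k'\<bar> \<bar>l'\<bar>)) + 1"
  have r0: "r > 0" unfolding r_def by linarith
  have rk: "\<bar>of_int k\<bar> \<le> r" "\<bar>of_int l\<bar> \<le> r" "\<bar>of_int k'\<bar> \<le> r" "\<bar>of_int l'\<bar> \<le> r"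
    unfolding r_def by linarith+
  define N where "N = nat \<lceil>2 * (norm v + norm w) / e\<rceil> + 1"
  have "\<not> grid_minimal f a b n i j r \<and> \<not> grid_maximal f a b n i j r"
    if n: "n \<ge> N" and q: "grid_vertex a b n i j \<in> ball p (e/2)" for n i j
  proof -
    let ?q = "grid_vertex a b n i j"
    define t where "t = 1 / real n"
    have n0: "n > 0" using n by (simp add: N_def)
    have t0: "t > 0" using n0 by (simp add: t_def)
    have "real n \<ge> 2 * (norm v + norm w) / e" using n unfolding N_def by linarith
    then have "real n * e \<ge> 2 * (norm v + norm w)" using e(1) by (simp add: divide_le_eq)
    then have h2: "2 * norm v + 2 * norm w \<le> real n * e" by (simp add: algebra_simps)
    have "2 * norm v \<le> real n * e" using h2 norm_ge_zero[of w] by linarith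
    moreover have "2 * norm w \<le> real n * e" using h2 norm_ge_zero[of v] by linarith
    ultimately have tb: "t * norm v \<le> e/2" "t * norm w \<le> e/2"
      using n0 e(1) by (auto simp: t_def field_simps)
    have inb: "?q + s *\<^sub>R u \<in> T" if "\<bar>s\<bar> \<le> t" "t * norm u \<le> e/2" for s u
    proof -
      have "dist p (?q + s *\<^sub>R u) \<le> dist p ?q + norm (s *\<^sub>R u)"
        by (metis dist_norm dist_triangle2 add_diff_cancel_left' norm_minus_commute)
      also have "norm (s *\<^sub>R u) = \<bar>s\<bar> * norm u" by simp
      also have "\<bar>s\<bar> * norm u \<le> t * norm u" using that by (simp add: mult_right_mono)
      finally have "dist p (?q + s *\<^sub>R u) < e" using q that by simp
      then show ?thesis using e(2) by auto
    qed
    have conc: "f (?q + t *\<^sub>R v) + f (?q + (-t) *\<^sub>R v) < 2 * f ?q"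
    proof (rule concave_strict[OF t0])
      fix s :: real assume "\<bar>s\<bar> \<le> t"
      then have "?q + s *\<^sub>R v \<in> T" using inb tb by blast
      then show "f differentiable (at (?q + s *\<^sub>R v)) \<and>
       (\<lambda>y. frechet_derivative f (at y) v) differentiable (at (?q + s *\<^sub>R v)) \<and>
       second_deriv f (?q + s *\<^sub>R v) v v < 0" using D1 spec[OF D2, of v] unfolding T_def by auto
    qed
    have conv: "f (?q + t *\<^sub>R w) + f (?q + (-t) *\<^sub>R w) > 2 * f ?q"
    proof (rule convex_strict[OF t0])
      fix s :: real assume "\<bar>s\<bar> \<le> t"
      then have "?q + s *\<^sub>R w \<in> T" using inb tb by blast
      then show "f differentiable (at (?q + s *\<^sub>R w)) \<and>
       (\<lambda>y. frechet_derivative f (at y) w) differentiable (at (?q + s *\<^sub>R w)) \<and>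
       second_deriv f (?q + s *\<^sub>R w) w w > 0" using D1 spec[OF D2, of w] unfolding T_def by auto
    qed
    have TD: "T \<subseteq> {0..a} \<times> {0..b}" using SD unfolding T_def by auto
    have v1: "?q + t *\<^sub>R v \<in> {0..a} \<times> {0..b}" "?q + (-t) *\<^sub>R v \<in> {0..a} \<times> {0..b}"
      using inb[of t v] inb[of "-t" v] tb t0 TD by auto
    have w1: "?q + t *\<^sub>R w \<in> {0..a} \<times> {0..b}" "?q + (-t) *\<^sub>R w \<in> {0..a} \<times> {0..b}"
      using inb[of t w] inb[of "-t" w] tb t0 TD by auto
    have "\<not> grid_minimal f a b n i j r"
      using not_min_dir(1)[OF assms(1,2) n0, of i j k l r f] v1 conc rk unfolding v_def t_def by blast
    moreover have "\<not> grid_maximal f a b n i j r"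
      using not_min_dir(2)[OF assms(1,2) n0, of i j k' l' r f] w1 conv rk unfolding w_def t_def by blast
    ultimately show ?thesis by blast
  qed
  then show ?thesis
    by (intro exI[of _ "ball p (e/2)"] exI[of _ r]) (use e(1) r0 in auto)
qed


end
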